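(* Let $\mathbb P$ be a probability measure on $\Omega_+$ under which $(\omega(x))_{x\ge0}$ is stationary. Then $E_0[D^x_\infty]\le1$ for all $x\ge0$.
   Context: Cookie environments: $\Omega_+=([1/2,1]^{\mathbb N})^{\mathbb Z}$, $\omega(x)=(\omega(x,i))_{i\ge1}$. $P_{x,\omega}$ is the law of the nearest-neighbor process $(X_n)_{n\ge0}$ with $X_0=x$ which, on its $i$-th visit to site $z$, jumps to $z+1$ with probability $\omega(z,i)$ and to $z-1$ otherwise. Annealed measure $P_x[\cdot]=\mathbb E[P_{x,\omega}[\cdot]]$, with expectation $E_x$. $D_n^x=\sum_{i=1}^{\#\{m<n:X_m=x\}}(2\omega(x,i)-1)$ and $D_\infty^x=\lim_{n\to\infty}D_n^x$ (total drift of the cookies at $x$ eaten by the walk). *)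

theory Defs
  imports "HOL-Probability.Probability"
begin

text \<open>Cookie environments. A cookie environment is a map
  omega :: int => nat => real; the value omega z i is the strength of the
  (i+1)-th cookie at site z (cookie indices are shifted to start at 0).\<close>

type_synonym env = "int \<Rightarrow> nat \<Rightarrow> real"

definition Omega_plus :: "env measure" where
  "Omega_plus = PiM UNIV (\<lambda>_::int. PiM UNIV (\<lambda>_::nat. restrict_space borel {1/2..1::real}))"

definition env_shift_restr :: "nat \<Rightarrow> env \<Rightarrow> (int \<Rightarrow> nat \<Rightarrow> real)" where
  "env_shift_restr k \<omega> = (\<lambda>x\<in>{0::int..}. \<omega> (x + int k))"

definition Omega_plus_nonneg :: "(int \<Rightarrow> nat \<Rightarrow> real) measure" where
  "Omega_plus_nonneg = PiM {0::int..} (\<lambda>_. PiM UNIV (\<lambda>_::nat. restrict_space borel {1/2..1::real}))"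

definition stationary_nonneg :: "env measure \<Rightarrow> bool" where
  "stationary_nonneg P \<longleftrightarrow>
     (\<forall>k. distr P Omega_plus_nonneg (env_shift_restr k) = distr P Omega_plus_nonneg (env_shift_restr 0))"

text \<open>Construction of the cookie walk from i.i.d. uniform [0,1] variables u n:
  hist omega x u n is the list [X_0, ..., X_n]. At step n the walk is at y = X_n, which
  is its j-th visit to y, j = #{m <= n. X_m = y}; it uses cookie j (index j-1 here)
  and jumps to y+1 iff u n < omega y (j-1), i.e. with probability omega(y,j).\<close>
primrec hist :: "env \<Rightarrow> int \<Rightarrow> (nat \<Rightarrow> real) \<Rightarrow> nat \<Rightarrow> int list" where
  "hist \<omega> x u 0 = [x]"
| "hist \<omega> x u (Suc n) =
     (let h = hist \<omega> x u n; y = last h; j = count_list h y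
      in h @ [if u n < \<omega> y (j - 1) then y + 1 else y - 1])"

definition walk :: "env \<Rightarrow> int \<Rightarrow> (nat \<Rightarrow> real) \<Rightarrow> nat \<Rightarrow> int" where
  "walk \<omega> x u n = last (hist \<omega> x u n)"

definition unif_seq :: "(nat \<Rightarrow> real) measure" where
  "unif_seq = PiM UNIV (\<lambda>_::nat. uniform_measure lborel {0..1::real})"

definition drift_n :: "env \<Rightarrow> (nat \<Rightarrow> int) \<Rightarrow> int \<Rightarrow> nat \<Rightarrow> real" where
  "drift_n \<omega> X z n = (\<Sum>i < card {m. m < n \<and> X m = z}. 2 * \<omega> z i - 1)"

text \<open>D_infty^z = lim_n D_n^z; on Omega_+ the sequence is nondecreasing and nonnegative,
  so the limit is its supremum in [0,infinity].\<close>
definition drift_inf :: "env \<Rightarrow> (nat \<Rightarrow> int) \<Rightarrow> int \<Rightarrow> ennreal" where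
  "drift_inf \<omega> X z = (SUP n. ennreal (drift_n \<omega> X z n))"

definition quenched_E_drift :: "env \<Rightarrow> int \<Rightarrow> int \<Rightarrow> ennreal" where
  "quenched_E_drift \<omega> x z = (\<integral>\<^sup>+ u. drift_inf \<omega> (walk \<omega> x u) z \<partial>unif_seq)"

definition annealed_E_drift :: "env measure \<Rightarrow> int \<Rightarrow> int \<Rightarrow> ennreal" where
  "annealed_E_drift P x z = (\<integral>\<^sup>+ \<omega>. quenched_E_drift \<omega> x z \<partial>P)"

end

theory Submission
  imports Defs
begin

definition eat :: "int \<Rightarrow> env \<Rightarrow> env" where
  "eat y \<omega> = fun_upd \<omega> y (\<lambda>i. \<omega> y (Suc i))"

definition nxt :: "env \<Rightarrow> int \<Rightarrow> real \<Rightarrow> int" where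
  "nxt \<omega> y a = (if a < \<omega> y 0 then y + 1 else y - 1)"

lemma hist_ne: "hist \<omega> y u n \<noteq> []"
  by (induction n) (auto simp: Let_def)

lemma hist_hd: "hd (hist \<omega> y u n) = y"
  by (induction n) (auto simp: Let_def hist_ne)

lemma hist_first:
  "hist \<omega> y u (Suc n) = y # hist (eat y \<omega>) (nxt \<omega> y (u 0)) (\<lambda>k. u (Suc k)) n"
proof (induction n)
  case 0
  then show ?case by (simp add: nxt_def)
next
  case (Suc n)
  define h' where "h' = hist (eat y \<omega>) (nxt \<omega> y (u 0)) (\<lambda>k. u (Suc k)) n"
  have IH: "hist \<omega> y u (Suc n) = y # h'" using Suc h'_def by simp
  have ne: "h' \<noteq> []" using hist_ne h'_def by simp
  define z where "z = last h'"
  have lz: "last (y # h') = z" using ne z_def by simp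
  have cz: "count_list h' z \<ge> 1" using ne z_def
    by (metis One_nat_def Suc_leI count_list_0_iff last_in_set neq0_conv)
  have E: "eat y \<omega> z (count_list h' z - 1) = \<omega> z (count_list (y # h') z - 1)"
    using cz by (auto simp: eat_def)
  define nx where "nx = (if u (Suc n) < \<omega> z (count_list (y # h') z - 1) then z + 1 else z - 1)"
  have L: "hist \<omega> y u (Suc (Suc n)) = (y # h') @ [nx]"
    by (simp only: hist.simps(2)[of \<omega> y u "Suc n"] IH Let_def lz nx_def)
  have R: "hist (eat y \<omega>) (nxt \<omega> y (u 0)) (\<lambda>k. u (Suc k)) (Suc n) = h' @ [nx]"
    apply (simp only: hist.simps(2)[of _ _ _ n] h'_def[symmetric] Let_def z_def[symmetric])
    using E by (simp add: nx_def)
  show ?case unfolding L R by simp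
qed


lemma walk_0: "walk \<omega> y u 0 = y" by (simp add: walk_def)

lemma walk_Suc:
  "walk \<omega> y u (Suc n) = walk (eat y \<omega>) (nxt \<omega> y (u 0)) (\<lambda>k. u (Suc k)) n"
  unfolding walk_def hist_first using hist_ne by simp

lemma walk_first:
  "walk \<omega> y u = case_nat y (walk (eat y \<omega>) (nxt \<omega> y (u 0)) (\<lambda>k. u (Suc k)))"
  by (rule ext, case_tac x) (simp_all add: walk_0 walk_Suc)

definition rw :: "int \<Rightarrow> env \<Rightarrow> int \<Rightarrow> real" where
  "rw x \<omega> y = (if y = x then 2 * \<omega> y 0 - 1 else 0)"

lemma card_first:
  "card {m. m < Suc n \<and> case_nat y X m = z} = (if y = z then 1 else 0) + card {m. m < n \<and> X m = z}"
proof -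
  have "{m. m < Suc n \<and> case_nat y X m = z} = (if y = z then {0} else {}) \<union> Suc ` {m. m < n \<and> X m = z}"
  proof (intro set_eqI iffI)
    fix m assume "m \<in> {m. m < Suc n \<and> case_nat y X m = z}"
    then show "m \<in> (if y = z then {0} else {}) \<union> Suc ` {m. m < n \<and> X m = z}"
      by (cases m) auto
  next
    fix m assume "m \<in> (if y = z then {0} else {}) \<union> Suc ` {m. m < n \<and> X m = z}"
    then show "m \<in> {m. m < Suc n \<and> case_nat y X m = z}"
      by (auto split: if_splits)
  qed
  moreover have "card ((if y = z then {0} else {}) \<union> Suc ` {m. m < n \<and> X m = z}) =
     (if y = z then 1 else 0) + card (Suc ` {m. m < n \<and> X m = z})"
    by (auto simp: card_insert_if)
  moreover have "card (Suc ` {m. m < n \<and> X m = z}) = card {m. m < n \<and> X m = z}"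
    by (rule card_image) simp
  ultimately show ?thesis by simp
qed

lemma drift_first:
  "drift_n \<omega> (case_nat y X) z (Suc n) = rw z \<omega> y + drift_n (eat y \<omega>) X z n"
proof (cases "y = z")
  case True
  have c: "card {m. m < Suc n \<and> case_nat y X m = z} = Suc (card {m. m < n \<and> X m = z})"
    by (simp add: card_first True)
  show ?thesis
    unfolding drift_n_def c sum.lessThan_Suc_shift
    using True by (simp add: rw_def eat_def)
next
  case False
  then show ?thesis
    unfolding drift_n_def card_first
    by (simp add: rw_def eat_def)
qed

definition good :: "env \<Rightarrow> bool" where
  "good \<omega> \<longleftrightarrow> (\<forall>z i. 1/2 \<le> \<omega> z i \<and> \<omega> z i \<le> 1)"

lemma good_eat: "good \<omega> \<Longrightarrow> good (eat y \<omega>)"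
  by (auto simp: good_def eat_def)

lemma drift_n_nonneg: "good \<omega> \<Longrightarrow> drift_n \<omega> X z n \<ge> 0"
  unfolding drift_n_def good_def by (intro sum_nonneg) (auto simp: field_simps)

lemma rw_nonneg: "good \<omega> \<Longrightarrow> rw x \<omega> y \<ge> 0"
  unfolding rw_def good_def by (auto simp: field_simps)

lemma rw_le1: "good \<omega> \<Longrightarrow> rw x \<omega> y \<le> 1"
  unfolding rw_def good_def by (auto simp: field_simps)

abbreviation U :: "real measure" where "U \<equiv> uniform_measure lborel {0..1::real}"

lemma prob_U: "prob_space U"
  by (rule prob_space_uniform_measure) auto

interpretation SQ: sequence_space U
  unfolding sequence_space_def product_prob_space_def product_sigma_finite_def
    product_prob_space_axioms_def
  using prob_U by (auto simp: prob_space_imp_sigma_finite)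

lemma unif_seq_eq: "unif_seq = SQ.S"
  by (simp add: unif_seq_def)

lemma measurable_stl[measurable]: "(\<lambda>u k. u (Suc k)) \<in> measurable unif_seq unif_seq"
  unfolding unif_seq_def
  by (rule measurable_PiM_single') (auto simp: space_PiM)

lemma drift_walk_Suc:
  "drift_n \<omega> (walk \<omega> y u) x (Suc n) =
   rw x \<omega> y + drift_n (eat y \<omega>) (walk (eat y \<omega>) (nxt \<omega> y (u 0)) (\<lambda>k. u (Suc k))) x n"
proof -
  have w: "walk \<omega> y u = case_nat y (walk (eat y \<omega>) (nxt \<omega> y (u 0)) (\<lambda>k. u (Suc k)))"
    by (rule walk_first)
  show ?thesis by (simp only: w drift_first)
qed

lemma measurable_drift:
  "(\<lambda>u. drift_n \<omega> (walk \<omega> y u) x n) \<in> borel_measurable unif_seq"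
proof (induction n arbitrary: \<omega> y)
  case 0
  then show ?case by (simp add: drift_n_def)
next
  case (Suc n)
  have eq: "(\<lambda>u. drift_n \<omega> (walk \<omega> y u) x (Suc n)) =
    (\<lambda>u. rw x \<omega> y + (if u 0 < \<omega> y 0 then drift_n (eat y \<omega>) (walk (eat y \<omega>) (y+1) (\<lambda>k. u (Suc k))) x n
        else drift_n (eat y \<omega>) (walk (eat y \<omega>) (y-1) (\<lambda>k. u (Suc k))) x n))"
    by (rule ext) (simp add: drift_walk_Suc nxt_def)
  have m1: "(\<lambda>u. drift_n (eat y \<omega>) (walk (eat y \<omega>) (y+1) (\<lambda>k. u (Suc k))) x n) \<in> borel_measurable unif_seq"
    using measurable_compose[OF measurable_stl Suc.IH[of "eat y \<omega>" "y+1"]] by simp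
  have m2: "(\<lambda>u. drift_n (eat y \<omega>) (walk (eat y \<omega>) (y-1) (\<lambda>k. u (Suc k))) x n) \<in> borel_measurable unif_seq"
    using measurable_compose[OF measurable_stl Suc.IH[of "eat y \<omega>" "y-1"]] by simp
  have m0: "(\<lambda>u. u 0) \<in> borel_measurable unif_seq"
    unfolding unif_seq_def
    by (rule measurable_compose[OF measurable_component_singleton, of 0 UNIV]) auto
  have ms: "{u \<in> space unif_seq. u 0 < \<omega> y 0} \<in> sets unif_seq"
    by (rule borel_measurable_less[OF m0 measurable_const]) simp
  show ?case unfolding eq
    by (intro borel_measurable_add measurable_const measurable_If m1 m2 ms) auto
qed

fun Op :: "(int \<Rightarrow> bool) \<Rightarrow> (int \<Rightarrow> real) \<Rightarrow> (int \<Rightarrow> real) \<Rightarrow> (env \<Rightarrow> int \<Rightarrow> real) \<Rightarrow> nat \<Rightarrow> env \<Rightarrow> int \<Rightarrow> real" where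
  "Op st tm tt r 0 \<omega> y = (if st y then tm y else tt y)"
| "Op st tm tt r (Suc n) \<omega> y = (if st y then tm y else
     r \<omega> y + \<omega> y 0 * Op st tm tt r n (eat y \<omega>) (y + 1) + (1 - \<omega> y 0) * Op st tm tt r n (eat y \<omega>) (y - 1))"

lemma good_p: "good \<omega> \<Longrightarrow> 0 \<le> \<omega> y 0 \<and> \<omega> y 0 \<le> 1 \<and> 1/2 \<le> \<omega> y 0"
  unfolding good_def by (metis dual_order.trans field_sum_of_halves le_add_same_cancel2 zero_le_divide_1_iff zero_le_numeral)

lemma Op_nonneg:
  assumes "\<And>\<omega> y. good \<omega> \<Longrightarrow> r \<omega> y \<ge> 0" "\<And>y. tm y \<ge> 0" "\<And>y. tt y \<ge> 0"
  shows "good \<omega> \<Longrightarrow> Op st tm tt r n \<omega> y \<ge> 0"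
proof (induction n arbitrary: \<omega> y)
  case 0 then show ?case using assms by simp
next
  case (Suc n)
  have p: "0 \<le> \<omega> y 0" "\<omega> y 0 \<le> 1" using good_p[OF Suc.prems] by auto
  have "Op st tm tt r n (eat y \<omega>) (y + 1) \<ge> 0" "Op st tm tt r n (eat y \<omega>) (y - 1) \<ge> 0"
    using Suc.IH good_eat Suc.prems by auto
  then show ?case using assms(1)[OF Suc.prems, of y] assms(2) p by simp
qed

definition R :: "int \<Rightarrow> nat \<Rightarrow> env \<Rightarrow> int \<Rightarrow> real" where
  "R x = Op (\<lambda>_. False) (\<lambda>_. 0) (\<lambda>_. 0) (rw x)"

lemma R_nonneg: "good \<omega> \<Longrightarrow> R x n \<omega> y \<ge> 0"
  unfolding R_def by (rule Op_nonneg) (auto simp: rw_nonneg)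

lemma R_0: "R x 0 \<omega> y = 0" by (simp add: R_def)
lemma R_Suc: "R x (Suc n) \<omega> y = rw x \<omega> y + \<omega> y 0 * R x n (eat y \<omega>) (y + 1) + (1 - \<omega> y 0) * R x n (eat y \<omega>) (y - 1)"
  by (simp add: R_def)

lemma step_int:
  assumes "0 \<le> p" "p \<le> 1"
  shows "(\<integral>\<^sup>+s. (if s < p then A else B) \<partial>U) = ennreal p * A + ennreal (1 - p) * B"
proof -
  have eq: "(\<lambda>s. if s < p then A else B) = (\<lambda>s. A * indicator {..<p} s + B * indicator {p..} s)"
    by (rule ext) (auto simp: indicator_def)
  have s1: "{..<p} \<in> sets U" "{p..} \<in> sets U" by auto
  have i1: "{0..1} \<inter> {..<p} = {0..<p}" using assms by auto
  have i2: "{0..1} \<inter> {p..} = {p..1}" using assms by auto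
  have e1: "emeasure U {..<p} = ennreal p"
    using assms by (subst emeasure_uniform_measure) (auto simp: i1 divide_ennreal_def)
  have e2: "emeasure U {p..} = ennreal (1 - p)"
    using assms by (subst emeasure_uniform_measure) (auto simp: i2 divide_ennreal_def)
  show ?thesis unfolding eq
    by (subst nn_integral_add) (auto simp: nn_integral_cmult_indicator e1 e2 mult.commute)
qed


interpretation PS: prob_space SQ.S
  by (rule prob_space_PiM) (rule prob_U)

lemma measurable_case_nat_seq: "(\<lambda>(s, v). case_nat s v) \<in> measurable (U \<Otimes>\<^sub>M SQ.S) SQ.S"
  by measurable

lemma link:
  "good \<omega> \<Longrightarrow> (\<integral>\<^sup>+u. ennreal (drift_n \<omega> (walk \<omega> y u) x n) \<partial>unif_seq) = ennreal (R x n \<omega> y)"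
proof (induction n arbitrary: \<omega> y)
  case 0
  then show ?case by (simp add: drift_n_def R_0)
next
  case (Suc n)
  define w where "w = eat y \<omega>"
  have gw: "good w" using Suc.prems good_eat w_def by simp
  define f where "f = (\<lambda>u. ennreal (drift_n \<omega> (walk \<omega> y u) x (Suc n)))"
  have fm: "f \<in> borel_measurable SQ.S"
    unfolding f_def using measurable_drift unif_seq_eq by (metis measurable_compose measurable_ennreal)
  have "(\<integral>\<^sup>+u. f u \<partial>SQ.S) = (\<integral>\<^sup>+u. f u \<partial>distr (U \<Otimes>\<^sub>M SQ.S) SQ.S (\<lambda>(s, v). case_nat s v))"
    by (simp add: SQ.PiM_iter)
  also have "\<dots> = (\<integral>\<^sup>+z. f (case_prod case_nat z) \<partial>(U \<Otimes>\<^sub>M SQ.S))"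
    by (rule nn_integral_distr[OF measurable_case_nat_seq]) (simp add: fm)
  also have "\<dots> = (\<integral>\<^sup>+s. \<integral>\<^sup>+v. f (case_nat s v) \<partial>SQ.S \<partial>U)"
    using SQ.P.nn_integral_fst[of "\<lambda>z. f (case_prod case_nat z)" U]
      measurable_compose[OF measurable_case_nat_seq fm] by simp
  also have "\<dots> = (\<integral>\<^sup>+s. ennreal (rw x \<omega> y) + ennreal (R x n w (nxt \<omega> y s)) \<partial>U)"
  proof (rule nn_integral_cong)
    fix s
    have fe: "f (case_nat s v) = ennreal (rw x \<omega> y) + ennreal (drift_n w (walk w (nxt \<omega> y s) v) x n)" for v
      unfolding f_def drift_walk_Suc w_def
      using rw_nonneg[OF Suc.prems] drift_n_nonneg[OF gw] w_def
      by (simp add: ennreal_plus)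
    have dm: "(\<lambda>v. ennreal (drift_n w (walk w (nxt \<omega> y s) v) x n)) \<in> borel_measurable SQ.S"
      using measurable_drift unif_seq_eq by (metis measurable_compose measurable_ennreal)
    have "(\<integral>\<^sup>+v. f (case_nat s v) \<partial>SQ.S) = (\<integral>\<^sup>+v. ennreal (rw x \<omega> y) \<partial>SQ.S) + (\<integral>\<^sup>+v. ennreal (drift_n w (walk w (nxt \<omega> y s) v) x n) \<partial>SQ.S)"
      unfolding fe by (rule nn_integral_add) (auto simp: dm)
    also have "\<dots> = ennreal (rw x \<omega> y) + ennreal (R x n w (nxt \<omega> y s))"
      using Suc.IH[OF gw, of "nxt \<omega> y s"] SQ.P.emeasure_space_1 unfolding unif_seq_eq by simp
    finally show "(\<integral>\<^sup>+v. f (case_nat s v) \<partial>SQ.S) = ennreal (rw x \<omega> y) + ennreal (R x n w (nxt \<omega> y s))" .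
  qed
  also have "\<dots> = (\<integral>\<^sup>+s. (if s < \<omega> y 0 then ennreal (rw x \<omega> y) + ennreal (R x n w (y + 1)) else ennreal (rw x \<omega> y) + ennreal (R x n w (y - 1))) \<partial>U)"
    by (rule nn_integral_cong) (simp add: nxt_def)
  also have "\<dots> = ennreal (\<omega> y 0) * (ennreal (rw x \<omega> y) + ennreal (R x n w (y + 1))) + ennreal (1 - \<omega> y 0) * (ennreal (rw x \<omega> y) + ennreal (R x n w (y - 1)))"
    using good_p[OF Suc.prems, of y] by (intro step_int) auto
  also have "\<dots> = ennreal (R x (Suc n) \<omega> y)"
  proof -
    have p: "0 \<le> \<omega> y 0" "\<omega> y 0 \<le> 1" using good_p[OF Suc.prems, of y] by auto
    have nn: "0 \<le> rw x \<omega> y" "0 \<le> R x n w (y+1)" "0 \<le> R x n w (y-1)"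
      using rw_nonneg[OF Suc.prems] R_nonneg[OF gw] by auto
    have "R x (Suc n) \<omega> y = \<omega> y 0 * (rw x \<omega> y + R x n w (y + 1)) + (1 - \<omega> y 0) * (rw x \<omega> y + R x n w (y - 1))"
      unfolding R_Suc w_def by (simp add: algebra_simps)
    then show ?thesis using p nn
      by (simp add: ennreal_plus[symmetric] ennreal_mult[symmetric] del: ennreal_plus)
  qed
  finally show ?case unfolding f_def unif_seq_eq .
qed

lemma drift_mono: "good \<omega> \<Longrightarrow> n \<le> n' \<Longrightarrow> drift_n \<omega> X z n \<le> drift_n \<omega> X z n'"
  unfolding drift_n_def
proof -
  assume g: "good \<omega>" and nn: "n \<le> n'"
  have "card {m. m < n \<and> X m = z} \<le> card {m. m < n' \<and> X m = z}"
    using nn by (intro card_mono) auto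
  then show "(\<Sum>i<card {m. m < n \<and> X m = z}. 2 * \<omega> z i - 1) \<le> (\<Sum>i<card {m. m < n' \<and> X m = z}. 2 * \<omega> z i - 1)"
    using g by (intro sum_mono2) (auto simp: good_def field_simps)
qed

lemma quenched_eq:
  assumes g: "good \<omega>"
  shows "quenched_E_drift \<omega> y x = (SUP n. ennreal (R x n \<omega> y))"
proof -
  have "quenched_E_drift \<omega> y x = (\<integral>\<^sup>+u. (SUP n. ennreal (drift_n \<omega> (walk \<omega> y u) x n)) \<partial>unif_seq)"
    unfolding quenched_E_drift_def drift_inf_def ..
  also have "\<dots> = (SUP n. (\<integral>\<^sup>+u. ennreal (drift_n \<omega> (walk \<omega> y u) x n) \<partial>unif_seq))"
  proof (rule nn_integral_monotone_convergence_SUP)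
    show "incseq (\<lambda>n u. ennreal (drift_n \<omega> (walk \<omega> y u) x n))"
      unfolding incseq_def le_fun_def using drift_mono[OF g] by (auto intro: ennreal_leI)
    show "\<And>n. (\<lambda>u. ennreal (drift_n \<omega> (walk \<omega> y u) x n)) \<in> borel_measurable unif_seq"
      using measurable_drift by (metis measurable_compose measurable_ennreal)
  qed
  also have "\<dots> = (SUP n. ennreal (R x n \<omega> y))"
    using link[OF g] by simp
  finally show ?thesis .
qed

abbreviation MF :: "env measure" where
  "MF \<equiv> PiM UNIV (\<lambda>_::int. PiM UNIV (\<lambda>_::nat. (borel :: real measure)))"

lemma comp2_meas: "(\<lambda>\<omega>. \<omega> z i) \<in> measurable (PiM UNIV (\<lambda>_::'a. PiM UNIV (\<lambda>_::'b. M))) M"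
proof -
  have "(\<lambda>\<omega>. \<omega> z) \<in> measurable (PiM UNIV (\<lambda>_::'a. PiM UNIV (\<lambda>_::'b. M))) (PiM UNIV (\<lambda>_::'b. M))"
    by (rule measurable_component_singleton) simp
  moreover have "(\<lambda>v. v i) \<in> measurable (PiM UNIV (\<lambda>_::'b. M)) M"
    by (rule measurable_component_singleton) simp
  ultimately show ?thesis by (rule measurable_compose)
qed

lemma comp_meas: "(\<lambda>\<omega>. \<omega> z i) \<in> borel_measurable MF"
  by (rule comp2_meas)

lemma eat_meas: "eat y \<in> measurable MF MF"
proof -
  have "(\<lambda>\<omega> z. eat y \<omega> z) \<in> measurable MF MF"
  proof (rule measurable_PiM_single')
    fix z :: int
    show "(\<lambda>\<omega>. eat y \<omega> z) \<in> measurable MF (PiM UNIV (\<lambda>_::nat. (borel :: real measure)))"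
    proof (cases "z = y")
      case True
      have "(\<lambda>\<omega> i. \<omega> y (Suc i)) \<in> measurable MF (PiM UNIV (\<lambda>_::nat. (borel :: real measure)))"
        by (rule measurable_PiM_single') (auto simp: comp_meas)
      then show ?thesis using True by (simp add: eat_def)
    next
      case False
      then show ?thesis by (simp add: eat_def)
    qed
  qed (auto simp: space_PiM)
  then show ?thesis by simp
qed

lemma Op_meas:
  assumes "\<And>y. (\<lambda>\<omega>. r \<omega> y) \<in> borel_measurable MF"
  shows "(\<lambda>\<omega>. Op st tm tt r n \<omega> y) \<in> borel_measurable MF"
proof (induction n arbitrary: y)
  case 0 then show ?case by simp
next
  case (Suc n)
  have a: "(\<lambda>\<omega>. Op st tm tt r n (eat y \<omega>) (y + 1)) \<in> borel_measurable MF"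
    using measurable_compose[OF eat_meas Suc.IH] by simp
  have b: "(\<lambda>\<omega>. Op st tm tt r n (eat y \<omega>) (y - 1)) \<in> borel_measurable MF"
    using measurable_compose[OF eat_meas Suc.IH] by simp
  show ?case
    using a b assms[of y] comp_meas[of y 0] by simp
qed

lemma rw_meas: "(\<lambda>\<omega>. rw x \<omega> y) \<in> borel_measurable MF"
  unfolding rw_def using comp_meas[of y 0] by simp

lemma to_MF:
  assumes "sets M = sets Omega_plus"
  shows "(\<lambda>\<omega>. \<omega>) \<in> measurable M MF"
proof -
  have "(\<lambda>\<omega>. \<omega>) \<in> measurable Omega_plus MF"
    unfolding Omega_plus_def
  proof (rule measurable_PiM_single')
    fix z :: int
    show "(\<lambda>\<omega>. \<omega> z) \<in> measurable (PiM UNIV (\<lambda>_::int. PiM UNIV (\<lambda>_::nat. restrict_space borel {1/2..1::real}))) (PiM UNIV (\<lambda>_::nat. (borel :: real measure)))"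
    proof (rule measurable_PiM_single')
      fix i :: nat
      show "(\<lambda>\<omega>. \<omega> z i) \<in> borel_measurable (PiM UNIV (\<lambda>_::int. PiM UNIV (\<lambda>_::nat. restrict_space borel {1/2..1::real})))"
        by (rule measurable_compose[OF comp2_meas]) (auto intro: measurable_restrict_space1)
    qed (auto simp: space_PiM)
  qed (auto simp: space_PiM)
  then show ?thesis using measurable_cong_sets[OF assms refl, of MF] by simp
qed

lemma space_good:
  assumes "sets M = sets Omega_plus" "\<omega> \<in> space M"
  shows "good \<omega>"
proof -
  have "space M = space Omega_plus" using sets_eq_imp_space_eq[OF assms(1)] .
  then show ?thesis using assms(2)
    by (auto simp: Omega_plus_def space_PiM good_def PiE_iff)
qed

definition S :: "int \<Rightarrow> int \<Rightarrow> nat \<Rightarrow> env \<Rightarrow> int \<Rightarrow> real" where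
  "S x N = Op (\<lambda>z. z = N) (\<lambda>_. 0) (\<lambda>_. 0) (rw x)"

definition T :: "int \<Rightarrow> nat \<Rightarrow> env \<Rightarrow> int \<Rightarrow> real" where
  "T N = Op (\<lambda>z. z = N) (\<lambda>_. 0) (\<lambda>_. 0) (\<lambda>\<omega> y. 2 * \<omega> y 0 - 1)"

lemma S_0[simp]: "S x N 0 \<omega> y = 0" by (simp add: S_def)
lemma S_Suc: "S x N (Suc n) \<omega> y = (if y = N then 0 else
  rw x \<omega> y + \<omega> y 0 * S x N n (eat y \<omega>) (y + 1) + (1 - \<omega> y 0) * S x N n (eat y \<omega>) (y - 1))"
  by (simp add: S_def)
lemma T_0[simp]: "T N 0 \<omega> y = 0" by (simp add: T_def)
lemma T_Suc: "T N (Suc n) \<omega> y = (if y = N then 0 else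
  (2 * \<omega> y 0 - 1) + \<omega> y 0 * T N n (eat y \<omega>) (y + 1) + (1 - \<omega> y 0) * T N n (eat y \<omega>) (y - 1))"
  by (simp add: T_def)

lemma S_nonneg: "good \<omega> \<Longrightarrow> S x N n \<omega> y \<ge> 0"
  unfolding S_def by (rule Op_nonneg) (auto simp: rw_nonneg)

lemma Op_mono_Suc:
  assumes "\<And>\<omega> y. good \<omega> \<Longrightarrow> r \<omega> y \<ge> 0"
  shows "good \<omega> \<Longrightarrow> Op st (\<lambda>_. 0) (\<lambda>_. 0) r n \<omega> y \<le> Op st (\<lambda>_. 0) (\<lambda>_. 0) r (Suc n) \<omega> y"
proof (induction n arbitrary: \<omega> y)
  case 0 then show ?case using assms by simp
next
  case (Suc n)
  have p: "0 \<le> \<omega> y 0" "\<omega> y 0 \<le> 1" using good_p[OF Suc.prems] by auto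
  have g: "good (eat y \<omega>)" using good_eat Suc.prems by simp
  have a: "\<omega> y 0 * Op st (\<lambda>_. 0) (\<lambda>_. 0) r n (eat y \<omega>) (y + 1) \<le> \<omega> y 0 * Op st (\<lambda>_. 0) (\<lambda>_. 0) r (Suc n) (eat y \<omega>) (y + 1)"
    using Suc.IH[OF g] p by (intro mult_left_mono) auto
  have b: "(1 - \<omega> y 0) * Op st (\<lambda>_. 0) (\<lambda>_. 0) r n (eat y \<omega>) (y - 1) \<le> (1 - \<omega> y 0) * Op st (\<lambda>_. 0) (\<lambda>_. 0) r (Suc n) (eat y \<omega>) (y - 1)"
    using Suc.IH[OF g] p by (intro mult_left_mono) auto
  show ?case using a b by (simp del: Op.simps(2) add: Op.simps(2)[of _ _ _ _ "Suc n"] Op.simps(2)[of _ _ _ _ n])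
qed

lemma S_mono_Suc: "good \<omega> \<Longrightarrow> S x N n \<omega> y \<le> S x N (Suc n) \<omega> y"
  unfolding S_def by (rule Op_mono_Suc) (auto simp: rw_nonneg)

lemma S_mono_add: "good \<omega> \<Longrightarrow> S x N n \<omega> y \<le> S x N (n + d) \<omega> y"
  by (induction d) (auto intro: order_trans S_mono_Suc)

lemma S_mono_time: "good \<omega> \<Longrightarrow> n \<le> n' \<Longrightarrow> S x N n \<omega> y \<le> S x N n' \<omega> y"
  using S_mono_add[of \<omega> x N n y "n' - n"] by simp

lemma R_mono_Suc: "good \<omega> \<Longrightarrow> R x n \<omega> y \<le> R x (Suc n) \<omega> y"
  unfolding R_def by (rule Op_mono_Suc) (auto simp: rw_nonneg)

lemma R_eq_S: "y + int n \<le> N \<Longrightarrow> R x n \<omega> y = S x N n \<omega> y"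
proof (induction n arbitrary: \<omega> y)
  case 0 then show ?case by (simp add: R_0)
next
  case (Suc n)
  have "y \<noteq> N" using Suc.prems by simp
  moreover have "R x n (eat y \<omega>) (y + 1) = S x N n (eat y \<omega>) (y + 1)"
    "R x n (eat y \<omega>) (y - 1) = S x N n (eat y \<omega>) (y - 1)"
    using Suc.prems by (auto intro!: Suc.IH)
  ultimately show ?case by (simp add: R_Suc S_Suc)
qed

lemma S_mono_N: "good \<omega> \<Longrightarrow> y \<le> N \<Longrightarrow> N \<le> N' \<Longrightarrow> S x N n \<omega> y \<le> S x N' n \<omega> y"
proof (induction n arbitrary: \<omega> y)
  case 0 then show ?case by simp
next
  case (Suc n)
  show ?case
  proof (cases "y = N")
    case True
    have "S x N (Suc n) \<omega> y = 0" using True by (simp add: S_Suc)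
    then show ?thesis using S_nonneg[OF Suc.prems(1), of x N' "Suc n" y] by simp
  next
    case False
    have p: "0 \<le> \<omega> y 0" "\<omega> y 0 \<le> 1" using good_p[OF Suc.prems(1)] by auto
    have g: "good (eat y \<omega>)" using good_eat Suc.prems by simp
    have a: "S x N n (eat y \<omega>) (y + 1) \<le> S x N' n (eat y \<omega>) (y + 1)"
      using Suc.IH[OF g] Suc.prems False by auto
    have b: "S x N n (eat y \<omega>) (y - 1) \<le> S x N' n (eat y \<omega>) (y - 1)"
      using Suc.IH[OF g] Suc.prems False by auto
    have "y \<noteq> N'" using False Suc.prems by auto
    then show ?thesis using False a b p
      by (simp add: S_Suc add_mono mult_left_mono)
  qed
qed

lemma S_sum_T: "finite Z \<Longrightarrow> good \<omega> \<Longrightarrow> (\<Sum>z\<in>Z. S z N n \<omega> y) \<le> T N n \<omega> y"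
proof (induction n arbitrary: \<omega> y)
  case 0 then show ?case by simp
next
  case (Suc n)
  show ?case
  proof (cases "y = N")
    case True then show ?thesis by (simp add: S_Suc T_Suc)
  next
    case False
    have p: "0 \<le> \<omega> y 0" "\<omega> y 0 \<le> 1" "1/2 \<le> \<omega> y 0" using good_p[OF Suc.prems(2)] by auto
    have g: "good (eat y \<omega>)" using good_eat Suc.prems by simp
    have "(\<Sum>z\<in>Z. S z N (Suc n) \<omega> y) = (\<Sum>z\<in>Z. rw z \<omega> y) + \<omega> y 0 * (\<Sum>z\<in>Z. S z N n (eat y \<omega>) (y + 1))
       + (1 - \<omega> y 0) * (\<Sum>z\<in>Z. S z N n (eat y \<omega>) (y - 1))"
      using False by (simp add: S_Suc sum.distrib sum_distrib_left)
    also have "(\<Sum>z\<in>Z. rw z \<omega> y) \<le> 2 * \<omega> y 0 - 1"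
    proof -
      have "(\<Sum>z\<in>Z. rw z \<omega> y) = (if y \<in> Z then 2 * \<omega> y 0 - 1 else 0)"
        unfolding rw_def using Suc.prems(1) by (simp add: sum.delta)
      then show ?thesis using p by auto
    qed
    also have "\<omega> y 0 * (\<Sum>z\<in>Z. S z N n (eat y \<omega>) (y + 1)) \<le> \<omega> y 0 * T N n (eat y \<omega>) (y + 1)"
      using Suc.IH[OF Suc.prems(1) g] p by (intro mult_left_mono) auto
    also have "(1 - \<omega> y 0) * (\<Sum>z\<in>Z. S z N n (eat y \<omega>) (y - 1)) \<le> (1 - \<omega> y 0) * T N n (eat y \<omega>) (y - 1)"
      using Suc.IH[OF Suc.prems(1) g] p by (intro mult_left_mono) auto
    finally show ?thesis using False by (simp add: T_Suc)
  qed
qed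

lemma T_bound: "good \<omega> \<Longrightarrow> y \<le> N \<Longrightarrow> T N n \<omega> y \<le> N - y"
proof (induction n arbitrary: \<omega> y)
  case 0 then show ?case by simp
next
  case (Suc n)
  show ?case
  proof (cases "y = N")
    case True then show ?thesis by (simp add: T_Suc)
  next
    case False
    have p: "0 \<le> \<omega> y 0" "\<omega> y 0 \<le> 1" using good_p[OF Suc.prems(1)] by auto
    have g: "good (eat y \<omega>)" using good_eat Suc.prems by simp
    have a0: "T N n (eat y \<omega>) (y + 1) \<le> real_of_int (N - (y + 1))"
      using Suc.IH[OF g, of "y+1"] Suc.prems False by auto
    have b0: "T N n (eat y \<omega>) (y - 1) \<le> real_of_int (N - (y - 1))"
      using Suc.IH[OF g, of "y-1"] Suc.prems False by auto
    have a: "\<omega> y 0 * T N n (eat y \<omega>) (y + 1) \<le> \<omega> y 0 * real_of_int (N - (y + 1))"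
      using a0 p by (intro mult_left_mono) auto
    have b: "(1 - \<omega> y 0) * T N n (eat y \<omega>) (y - 1) \<le> (1 - \<omega> y 0) * real_of_int (N - (y - 1))"
      using b0 p by (intro mult_left_mono) auto
    have "T N (Suc n) \<omega> y \<le> (2 * \<omega> y 0 - 1) + \<omega> y 0 * real_of_int (N - (y + 1)) + (1 - \<omega> y 0) * real_of_int (N - (y - 1))"
      using False a b by (simp add: T_Suc)
    also have "\<dots> = N - y" by (simp add: algebra_simps)
    finally show ?thesis .
  qed
qed

definition shift :: "int \<Rightarrow> env \<Rightarrow> env" where
  "shift k \<omega> = (\<lambda>z. \<omega> (z + k))"

lemma shift_eat: "shift k (eat y \<omega>) = eat (y - k) (shift k \<omega>)"
  by (rule ext) (auto simp: shift_def eat_def)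

lemma good_shift: "good \<omega> \<Longrightarrow> good (shift k \<omega>)"
  by (auto simp: good_def shift_def)

lemma S_shift: "S (x + k) (N + k) n \<omega> y = S x N n (shift k \<omega>) (y - k)"
proof (induction n arbitrary: \<omega> y)
  case 0 then show ?case by simp
next
  case (Suc n)
  have "rw (x + k) \<omega> y = rw x (shift k \<omega>) (y - k)" by (cases "y = x + k") (auto simp: rw_def shift_def)
  moreover have "S (x + k) (N + k) n (eat y \<omega>) (y + 1) = S x N n (shift k (eat y \<omega>)) (y - k + 1)"
    using Suc.IH[of "eat y \<omega>" "y + 1"] by (simp add: algebra_simps)
  moreover have "S (x + k) (N + k) n (eat y \<omega>) (y - 1) = S x N n (shift k (eat y \<omega>)) (y - k - 1)"
    using Suc.IH[of "eat y \<omega>" "y - 1"] by (simp add: algebra_simps)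
  moreover have "shift k \<omega> (y - k) 0 = \<omega> y 0" by (simp add: shift_def)
  ultimately show ?case by (simp add: S_Suc shift_eat)
qed

fun F :: "int \<Rightarrow> int \<Rightarrow> nat \<Rightarrow> env \<Rightarrow> int \<Rightarrow> real" where
  "F x N 0 \<omega> y = 0"
| "F x N (Suc m) \<omega> y = (if y = N then 0 else
     rw x \<omega> y + \<omega> y 0 * F x N m (eat y \<omega>) (y + 1) + (1 - \<omega> y 0) * F x N m (eat y \<omega>) (max 0 (y - 1)))"

declare F.simps(2)[simp del]

lemma F_nonneg: "good \<omega> \<Longrightarrow> F x N m \<omega> y \<ge> 0"
proof (induction m arbitrary: \<omega> y)
  case 0 then show ?case by simp
next
  case (Suc m)
  have p: "0 \<le> \<omega> y 0" "\<omega> y 0 \<le> 1" using good_p[OF Suc.prems] by auto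
  have g: "good (eat y \<omega>)" using good_eat Suc.prems by simp
  show ?case using Suc.IH[OF g] p rw_nonneg[OF Suc.prems] by (simp add: F.simps(2))
qed

lemma F_le: "good \<omega> \<Longrightarrow> F x N m \<omega> y \<le> m"
proof (induction m arbitrary: \<omega> y)
  case 0 then show ?case by simp
next
  case (Suc m)
  have p: "0 \<le> \<omega> y 0" "\<omega> y 0 \<le> 1" using good_p[OF Suc.prems] by auto
  have g: "good (eat y \<omega>)" using good_eat Suc.prems by simp
  have a: "\<omega> y 0 * F x N m (eat y \<omega>) (y + 1) \<le> \<omega> y 0 * m"
    using Suc.IH[OF g] p by (intro mult_left_mono) auto
  have b: "(1 - \<omega> y 0) * F x N m (eat y \<omega>) (max 0 (y - 1)) \<le> (1 - \<omega> y 0) * m"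
    using Suc.IH[OF g] p by (intro mult_left_mono) auto
  have "F x N (Suc m) \<omega> y \<le> 1 + \<omega> y 0 * m + (1 - \<omega> y 0) * m"
    using a b rw_le1[OF Suc.prems, of x y] p by (auto simp: F.simps(2))
  also have "\<dots> = Suc m" by (simp add: algebra_simps)
  finally show ?case .
qed

lemma F_mono_Suc: "good \<omega> \<Longrightarrow> F x N m \<omega> y \<le> F x N (Suc m) \<omega> y"
proof (induction m arbitrary: \<omega> y)
  case 0 then show ?case using rw_nonneg[OF 0] by (simp add: F.simps(2))
next
  case (Suc m)
  have p: "0 \<le> \<omega> y 0" "\<omega> y 0 \<le> 1" using good_p[OF Suc.prems] by auto
  have g: "good (eat y \<omega>)" using good_eat Suc.prems by simp
  have a: "\<omega> y 0 * F x N m (eat y \<omega>) (y + 1) \<le> \<omega> y 0 * F x N (Suc m) (eat y \<omega>) (y + 1)"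
    using Suc.IH[OF g] p by (intro mult_left_mono) auto
  have b: "(1 - \<omega> y 0) * F x N m (eat y \<omega>) (max 0 (y - 1)) \<le> (1 - \<omega> y 0) * F x N (Suc m) (eat y \<omega>) (max 0 (y - 1))"
    using Suc.IH[OF g] p by (intro mult_left_mono) auto
  show ?case using a b by (simp only: F.simps(2)[of x N "Suc m"] F.simps(2)[of x N m]) auto
qed

lemma F_mono_add: "good \<omega> \<Longrightarrow> F x N n \<omega> y \<le> F x N (n + d) \<omega> y"
  by (induction d) (auto intro: order_trans F_mono_Suc)

lemma F_mono_time: "good \<omega> \<Longrightarrow> n \<le> n' \<Longrightarrow> F x N n \<omega> y \<le> F x N n' \<omega> y"
  using F_mono_add[of \<omega> x N n y "n' - n"] by simp

lemma F_cong: "0 \<le> y \<Longrightarrow> (\<And>z. 0 \<le> z \<Longrightarrow> \<omega> z = \<omega>' z) \<Longrightarrow> F x N m \<omega> y = F x N m \<omega>' y"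
proof (induction m arbitrary: \<omega> \<omega>' y)
  case 0 then show ?case by simp
next
  case (Suc m)
  have e: "\<And>z. 0 \<le> z \<Longrightarrow> eat y \<omega> z = eat y \<omega>' z" using Suc.prems by (auto simp: eat_def)
  have "F x N m (eat y \<omega>) (y + 1) = F x N m (eat y \<omega>') (y + 1)"
    using Suc.prems e by (intro Suc.IH) auto
  moreover have "F x N m (eat y \<omega>) (max 0 (y - 1)) = F x N m (eat y \<omega>') (max 0 (y - 1))"
    using Suc.prems e by (intro Suc.IH) auto
  moreover have "\<omega> y = \<omega>' y" using Suc.prems by auto
  ultimately show ?case by (cases "y = x") (auto simp: F.simps(2) rw_def)
qed

lemma F_mono_N: "good \<omega> \<Longrightarrow> y \<le> N \<Longrightarrow> N \<le> N' \<Longrightarrow> 0 \<le> N \<Longrightarrow> F x N m \<omega> y \<le> F x N' m \<omega> y"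
proof (induction m arbitrary: \<omega> y)
  case 0 then show ?case by simp
next
  case (Suc m)
  show ?case
  proof (cases "y = N")
    case True
    have "F x N (Suc m) \<omega> y = 0" using True by (simp add: F.simps(2))
    then show ?thesis using F_nonneg[OF Suc.prems(1), of x N' "Suc m" y] by simp
  next
    case False
    have p: "0 \<le> \<omega> y 0" "\<omega> y 0 \<le> 1" using good_p[OF Suc.prems(1)] by auto
    have g: "good (eat y \<omega>)" using good_eat Suc.prems by simp
    have a: "F x N m (eat y \<omega>) (y + 1) \<le> F x N' m (eat y \<omega>) (y + 1)"
      using Suc.IH[OF g] Suc.prems False by auto
    have b: "F x N m (eat y \<omega>) (max 0 (y - 1)) \<le> F x N' m (eat y \<omega>) (max 0 (y - 1))"
      using Suc.IH[OF g] Suc.prems False by auto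
    have "y \<noteq> N'" using False Suc.prems by auto
    then show ?thesis using False a b p
      by (simp add: F.simps(2) add_mono mult_left_mono)
  qed
qed

lemma S_le_F: "good \<omega> \<Longrightarrow> 0 \<le> x \<Longrightarrow> 0 < N \<Longrightarrow> S x N n \<omega> y \<le> F x N n \<omega> (max y 0)"
proof (induction n arbitrary: \<omega> y)
  case 0 then show ?case by simp
next
  case (Suc n)
  have p: "0 \<le> \<omega> y 0" "\<omega> y 0 \<le> 1" using good_p[OF Suc.prems(1)] by auto
  have g: "good (eat y \<omega>)" using good_eat Suc.prems by simp
  show ?case
  proof (cases "0 \<le> y")
    case True
    show ?thesis
    proof (cases "y = N")
      case True then show ?thesis using \<open>0 \<le> y\<close> by (simp add: S_Suc F.simps(2))
    next
      case False
      have a: "\<omega> y 0 * S x N n (eat y \<omega>) (y + 1) \<le> \<omega> y 0 * F x N n (eat y \<omega>) (y + 1)"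
        using Suc.IH[OF g Suc.prems(2,3), of "y+1"] p \<open>0 \<le> y\<close> by (intro mult_left_mono) auto
      have b: "(1 - \<omega> y 0) * S x N n (eat y \<omega>) (y - 1) \<le> (1 - \<omega> y 0) * F x N n (eat y \<omega>) (max 0 (y - 1))"
        using Suc.IH[OF g Suc.prems(2,3), of "y-1"] p by (intro mult_left_mono) (auto simp: max.commute)
      show ?thesis using a b False \<open>0 \<le> y\<close> by (simp add: S_Suc F.simps(2))
    qed
  next
    case False
    have yN: "y \<noteq> N" using False Suc.prems by auto
    have r0: "rw x \<omega> y = 0" using False Suc.prems by (auto simp: rw_def)
    have a: "\<omega> y 0 * S x N n (eat y \<omega>) (y + 1) \<le> \<omega> y 0 * F x N n (eat y \<omega>) 0"
      using Suc.IH[OF g Suc.prems(2,3), of "y+1"] p False by (intro mult_left_mono) auto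
    have b: "(1 - \<omega> y 0) * S x N n (eat y \<omega>) (y - 1) \<le> (1 - \<omega> y 0) * F x N n (eat y \<omega>) 0"
      using Suc.IH[OF g Suc.prems(2,3), of "y-1"] p False by (intro mult_left_mono) auto
    have c: "F x N n (eat y \<omega>) 0 = F x N n \<omega> 0"
      using False by (intro F_cong) (auto simp: eat_def)
    have "S x N (Suc n) \<omega> y \<le> \<omega> y 0 * F x N n (eat y \<omega>) 0 + (1 - \<omega> y 0) * F x N n (eat y \<omega>) 0"
      using a b yN r0 by (simp add: S_Suc)
    also have "\<dots> = F x N n \<omega> 0" using c by (simp add: algebra_simps)
    also have "\<dots> \<le> F x N (Suc n) \<omega> 0" by (rule F_mono_Suc[OF Suc.prems(1)])
    finally show ?thesis using False by simp
  qed
qed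

definition stp :: "int \<Rightarrow> int \<Rightarrow> bool" where "stp L y \<longleftrightarrow> 0 \<le> y \<or> y \<le> -L"

definition hh :: "int \<Rightarrow> nat \<Rightarrow> env \<Rightarrow> int \<Rightarrow> real" where
  "hh L = Op (stp L) (\<lambda>y. if 0 \<le> y then 1 else 0) (\<lambda>_. 0) (\<lambda>_ _. 0)"
definition WW :: "int \<Rightarrow> nat \<Rightarrow> env \<Rightarrow> int \<Rightarrow> real" where
  "WW L = Op (stp L) (\<lambda>y. (y + L) / L) (\<lambda>y. (y + L) / L) (\<lambda>_ _. 0)"
definition Stay :: "int \<Rightarrow> nat \<Rightarrow> env \<Rightarrow> int \<Rightarrow> real" where
  "Stay L = Op (stp L) (\<lambda>_. 0) (\<lambda>_. 1) (\<lambda>_ _. 0)"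
definition Tm :: "int \<Rightarrow> nat \<Rightarrow> env \<Rightarrow> int \<Rightarrow> real" where
  "Tm L = Op (stp L) (\<lambda>_. 0) (\<lambda>_. 0) (\<lambda>_ _. 1)"
definition AA :: "int \<Rightarrow> nat \<Rightarrow> env \<Rightarrow> int \<Rightarrow> real" where
  "AA L = Op (stp L) (\<lambda>y. (real_of_int (y + L))^2) (\<lambda>y. (real_of_int (y + L))^2) (\<lambda>_ _. 0)"

lemma Op_stop: "st y \<Longrightarrow> Op st tm tt r n \<omega> y = tm y"
  by (cases n) auto

lemma Op_go: "\<not> st y \<Longrightarrow> Op st tm tt r (Suc n) \<omega> y =
   r \<omega> y + \<omega> y 0 * Op st tm tt r n (eat y \<omega>) (y + 1) + (1 - \<omega> y 0) * Op st tm tt r n (eat y \<omega>) (y - 1)"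
  by simp

lemma interior: "\<not> stp L y \<Longrightarrow> -L < y \<and> y < 0"
  by (auto simp: stp_def)

lemma WW_ge:
  assumes "0 < L"
  shows "good \<omega> \<Longrightarrow> -L \<le> y \<Longrightarrow> y \<le> 0 \<Longrightarrow> (y + L) / L \<le> WW L j \<omega> y"
proof (induction j arbitrary: \<omega> y)
  case 0 then show ?case by (simp add: WW_def)
next
  case (Suc j)
  show ?case
  proof (cases "stp L y")
    case True then show ?thesis by (simp add: WW_def Op_stop)
  next
    case False
    note i = interior[OF False]
    have p: "0 \<le> \<omega> y 0" "\<omega> y 0 \<le> 1" "1/2 \<le> \<omega> y 0" using good_p[OF Suc.prems(1)] by auto
    have g: "good (eat y \<omega>)" using good_eat Suc.prems by simp
    have a: "\<omega> y 0 * ((y + 1 + L) / L) \<le> \<omega> y 0 * WW L j (eat y \<omega>) (y + 1)"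
      using Suc.IH[OF g, of "y+1"] i p by (intro mult_left_mono) auto
    have b: "(1 - \<omega> y 0) * ((y - 1 + L) / L) \<le> (1 - \<omega> y 0) * WW L j (eat y \<omega>) (y - 1)"
      using Suc.IH[OF g, of "y-1"] i p by (intro mult_left_mono) auto
    have "(y + L) / L \<le> \<omega> y 0 * ((y + 1 + L) / L) + (1 - \<omega> y 0) * ((y - 1 + L) / L)"
      using p assms by (simp add: field_simps)
    also have "\<dots> \<le> WW L (Suc j) \<omega> y"
      using a b False unfolding WW_def by simp
    finally show ?thesis by simp
  qed
qed

lemma Stay_bounds: "good \<omega> \<Longrightarrow> 0 \<le> Stay L j \<omega> y \<and> Stay L j \<omega> y \<le> 1"
proof (induction j arbitrary: \<omega> y)
  case 0 then show ?case by (simp add: Stay_def)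
next
  case (Suc j)
  show ?case
  proof (cases "stp L y")
    case True then show ?thesis by (simp add: Stay_def Op_stop)
  next
    case False
    have p: "0 \<le> \<omega> y 0" "\<omega> y 0 \<le> 1" using good_p[OF Suc.prems(1)] by auto
    have g: "good (eat y \<omega>)" using good_eat Suc.prems by simp
    have e: "Stay L (Suc j) \<omega> y = \<omega> y 0 * Stay L j (eat y \<omega>) (y + 1) + (1 - \<omega> y 0) * Stay L j (eat y \<omega>) (y - 1)"
      using False unfolding Stay_def by simp
    have a: "0 \<le> Stay L j (eat y \<omega>) (y + 1)" "Stay L j (eat y \<omega>) (y + 1) \<le> 1"
      "0 \<le> Stay L j (eat y \<omega>) (y - 1)" "Stay L j (eat y \<omega>) (y - 1) \<le> 1"
      using Suc.IH[OF g] by auto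
    have "\<omega> y 0 * Stay L j (eat y \<omega>) (y + 1) \<le> \<omega> y 0 * 1"
      using a p by (intro mult_left_mono) auto
    moreover have "(1 - \<omega> y 0) * Stay L j (eat y \<omega>) (y - 1) \<le> (1 - \<omega> y 0) * 1"
      using a p by (intro mult_left_mono) auto
    ultimately show ?thesis unfolding e using a p by simp
  qed
qed

lemma WW_le:
  assumes "0 < L"
  shows "good \<omega> \<Longrightarrow> -L \<le> y \<Longrightarrow> y \<le> 0 \<Longrightarrow> WW L j \<omega> y \<le> hh L j \<omega> y + Stay L j \<omega> y"
proof (induction j arbitrary: \<omega> y)
  case 0 then show ?case using assms by (auto simp: WW_def hh_def Stay_def stp_def)
next
  case (Suc j)
  show ?case
  proof (cases "stp L y")
    case True then show ?thesis using Suc.prems assms by (auto simp: WW_def hh_def Stay_def Op_stop stp_def)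
  next
    case False
    note i = interior[OF False]
    have p: "0 \<le> \<omega> y 0" "\<omega> y 0 \<le> 1" using good_p[OF Suc.prems(1)] by auto
    have g: "good (eat y \<omega>)" using good_eat Suc.prems by simp
    have a: "\<omega> y 0 * WW L j (eat y \<omega>) (y + 1) \<le> \<omega> y 0 * (hh L j (eat y \<omega>) (y + 1) + Stay L j (eat y \<omega>) (y + 1))"
      using Suc.IH[OF g, of "y+1"] i p by (intro mult_left_mono) auto
    have b: "(1 - \<omega> y 0) * WW L j (eat y \<omega>) (y - 1) \<le> (1 - \<omega> y 0) * (hh L j (eat y \<omega>) (y - 1) + Stay L j (eat y \<omega>) (y - 1))"
      using Suc.IH[OF g, of "y-1"] i p by (intro mult_left_mono) auto
    show ?thesis
      using a b False unfolding WW_def hh_def Stay_def by (simp add: algebra_simps)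
  qed
qed

lemma AA_ge:
  assumes "0 < L"
  shows "good \<omega> \<Longrightarrow> -L \<le> y \<Longrightarrow> y \<le> 0 \<Longrightarrow> (real_of_int (y + L))^2 + Tm L j \<omega> y \<le> AA L j \<omega> y"
proof (induction j arbitrary: \<omega> y)
  case 0 then show ?case by (simp add: AA_def Tm_def)
next
  case (Suc j)
  show ?case
  proof (cases "stp L y")
    case True then show ?thesis by (simp add: AA_def Tm_def Op_stop)
  next
    case False
    note i = interior[OF False]
    have p: "0 \<le> \<omega> y 0" "\<omega> y 0 \<le> 1" "1/2 \<le> \<omega> y 0" using good_p[OF Suc.prems(1)] by auto
    have g: "good (eat y \<omega>)" using good_eat Suc.prems by simp
    define w where "w = real_of_int (y + L)"
    have w0: "0 \<le> w" using i w_def by simp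
    have a: "\<omega> y 0 * ((w + 1)^2 + Tm L j (eat y \<omega>) (y + 1)) \<le> \<omega> y 0 * AA L j (eat y \<omega>) (y + 1)"
      using Suc.IH[OF g, of "y+1"] i p unfolding w_def by (intro mult_left_mono) (auto simp: algebra_simps)
    have b: "(1 - \<omega> y 0) * ((w - 1)^2 + Tm L j (eat y \<omega>) (y - 1)) \<le> (1 - \<omega> y 0) * AA L j (eat y \<omega>) (y - 1)"
      using Suc.IH[OF g, of "y-1"] i p unfolding w_def by (intro mult_left_mono) (auto simp: algebra_simps)
    have key: "w^2 + 1 \<le> \<omega> y 0 * (w + 1)^2 + (1 - \<omega> y 0) * (w - 1)^2"
    proof -
      have "\<omega> y 0 * (w + 1)^2 + (1 - \<omega> y 0) * (w - 1)^2 = w^2 + 1 + 2 * w * (2 * \<omega> y 0 - 1)"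
        by (simp add: power2_eq_square algebra_simps)
      moreover have "0 \<le> 2 * w * (2 * \<omega> y 0 - 1)" using w0 p by simp
      ultimately show ?thesis by simp
    qed
    have tm: "Tm L (Suc j) \<omega> y = 1 + \<omega> y 0 * Tm L j (eat y \<omega>) (y + 1) + (1 - \<omega> y 0) * Tm L j (eat y \<omega>) (y - 1)"
      using False unfolding Tm_def by simp
    have aa: "AA L (Suc j) \<omega> y = \<omega> y 0 * AA L j (eat y \<omega>) (y + 1) + (1 - \<omega> y 0) * AA L j (eat y \<omega>) (y - 1)"
      using False unfolding AA_def by simp
    show ?thesis unfolding tm aa w_def[symmetric] using a b key by (simp add: algebra_simps)
  qed
qed

lemma AA_le:
  assumes "0 < L"
  shows "good \<omega> \<Longrightarrow> -L \<le> y \<Longrightarrow> y \<le> 0 \<Longrightarrow> AA L j \<omega> y \<le> (real_of_int L)^2"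
proof (induction j arbitrary: \<omega> y)
  case 0
  have "(real_of_int (y + L))^2 \<le> (real_of_int L)^2"
    using 0 by (intro power_mono) auto
  then show ?case by (simp add: AA_def)
next
  case (Suc j)
  show ?case
  proof (cases "stp L y")
    case True
    have "(real_of_int (y + L))^2 \<le> (real_of_int L)^2"
      using Suc.prems by (intro power_mono) auto
    then show ?thesis using True by (simp add: AA_def Op_stop)
  next
    case False
    note i = interior[OF False]
    have p: "0 \<le> \<omega> y 0" "\<omega> y 0 \<le> 1" using good_p[OF Suc.prems(1)] by auto
    have g: "good (eat y \<omega>)" using good_eat Suc.prems by simp
    have a: "\<omega> y 0 * AA L j (eat y \<omega>) (y + 1) \<le> \<omega> y 0 * (real_of_int L)^2"
      using Suc.IH[OF g, of "y+1"] i p by (intro mult_left_mono) auto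
    have b: "(1 - \<omega> y 0) * AA L j (eat y \<omega>) (y - 1) \<le> (1 - \<omega> y 0) * (real_of_int L)^2"
      using Suc.IH[OF g, of "y-1"] i p by (intro mult_left_mono) auto
    have aa: "AA L (Suc j) \<omega> y = \<omega> y 0 * AA L j (eat y \<omega>) (y + 1) + (1 - \<omega> y 0) * AA L j (eat y \<omega>) (y - 1)"
      using False unfolding AA_def by simp
    show ?thesis unfolding aa using a b by (simp add: algebra_simps)
  qed
qed

lemma Stay_Tm: "good \<omega> \<Longrightarrow> real j * Stay L j \<omega> y \<le> Tm L j \<omega> y"
proof (induction j arbitrary: \<omega> y)
  case 0 then show ?case by (simp add: Tm_def)
next
  case (Suc j)
  show ?case
  proof (cases "stp L y")
    case True then show ?thesis by (simp add: Stay_def Tm_def Op_stop)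
  next
    case False
    have p: "0 \<le> \<omega> y 0" "\<omega> y 0 \<le> 1" using good_p[OF Suc.prems(1)] by auto
    have g: "good (eat y \<omega>)" using good_eat Suc.prems by simp
    have a: "\<omega> y 0 * (real j * Stay L j (eat y \<omega>) (y + 1)) \<le> \<omega> y 0 * Tm L j (eat y \<omega>) (y + 1)"
      using Suc.IH[OF g] p by (intro mult_left_mono) auto
    have b: "(1 - \<omega> y 0) * (real j * Stay L j (eat y \<omega>) (y - 1)) \<le> (1 - \<omega> y 0) * Tm L j (eat y \<omega>) (y - 1)"
      using Suc.IH[OF g] p by (intro mult_left_mono) auto
    have st: "Stay L (Suc j) \<omega> y = \<omega> y 0 * Stay L j (eat y \<omega>) (y + 1) + (1 - \<omega> y 0) * Stay L j (eat y \<omega>) (y - 1)"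
      using False unfolding Stay_def by simp
    have tm: "Tm L (Suc j) \<omega> y = 1 + \<omega> y 0 * Tm L j (eat y \<omega>) (y + 1) + (1 - \<omega> y 0) * Tm L j (eat y \<omega>) (y - 1)"
      using False unfolding Tm_def by simp
    have s1: "Stay L (Suc j) \<omega> y \<le> 1" using Stay_bounds[OF Suc.prems] by auto
    have "real (Suc j) * Stay L (Suc j) \<omega> y = real j * Stay L (Suc j) \<omega> y + Stay L (Suc j) \<omega> y"
      by (simp add: algebra_simps)
    also have "\<dots> \<le> real j * Stay L (Suc j) \<omega> y + 1" using s1 by simp
    also have "real j * Stay L (Suc j) \<omega> y = \<omega> y 0 * (real j * Stay L j (eat y \<omega>) (y + 1)) + (1 - \<omega> y 0) * (real j * Stay L j (eat y \<omega>) (y - 1))"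
      unfolding st by (simp add: algebra_simps)
    finally show ?thesis unfolding tm using a b by simp
  qed
qed

lemma hh_bound:
  assumes "0 < L" "good \<omega>" "-L \<le> y" "y \<le> 0" "0 < j"
  shows "(y + L) / L - (real_of_int L)^2 / j \<le> hh L j \<omega> y"
proof -
  have "Tm L j \<omega> y \<le> (real_of_int L)^2"
    using AA_ge[OF assms(1,2,3,4), of j] AA_le[OF assms(1,2,3,4), of j]
    by (smt (verit) zero_le_power2)
  then have "real j * Stay L j \<omega> y \<le> (real_of_int L)^2" using Stay_Tm[OF assms(2)] by (meson order_trans)
  then have "Stay L j \<omega> y \<le> (real_of_int L)^2 / j" using assms(5) by (simp add: field_simps)
  then show ?thesis using WW_ge[OF assms(1-4), of j] WW_le[OF assms(1-4), of j] by simp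
qed

lemma hh_close:
  assumes "0 < \<delta>" "0 \<le> k"
  shows "\<exists>L j. 0 < L \<and> k \<le> L \<and> (\<forall>\<omega>. good \<omega> \<longrightarrow> 1 - \<delta> \<le> hh L j \<omega> (-k))"
proof -
  obtain n :: nat where n: "2 * (real_of_int k + 1) / \<delta> < n" using reals_Archimedean2 by blast
  have "0 < 2 * (real_of_int k + 1) / \<delta>" using assms by simp
  then have npos: "0 < real n" using n by linarith
  define L where "L = int n + k"
  have Lpos: "0 < L" using npos assms L_def by simp
  have "2 * (real_of_int k + 1) < \<delta> * n" using n assms by (simp add: field_simps)
  then have kL: "2 * real_of_int k \<le> \<delta> * real_of_int L"
  proof -
    have "\<delta> * real_of_int L = \<delta> * n + \<delta> * k" by (simp add: L_def algebra_simps)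
    moreover have "0 \<le> \<delta> * k" using assms by simp
    ultimately show ?thesis using \<open>2 * (real_of_int k + 1) < \<delta> * n\<close> by (smt (verit))
  qed
  obtain j :: nat where j: "2 * (real_of_int L)^2 / \<delta> < j" using reals_Archimedean2 by blast
  have "0 \<le> 2 * (real_of_int L)^2 / \<delta>" using assms by simp
  then have "0 < real j" using j by linarith
  then have jpos: "0 < j" by simp
  have jL: "2 * (real_of_int L)^2 \<le> \<delta> * j" using j assms by (simp add: field_simps)
  have A: "1 - \<delta> \<le> real_of_int (-k + L) / L - (real_of_int L)^2 / j"
  proof -
    have "real_of_int (-k + L) / L = 1 - k / L" using Lpos by (simp add: field_simps)
    moreover have "k / L \<le> \<delta> / 2" using kL Lpos by (simp add: field_simps)
    moreover have "(real_of_int L)^2 / j \<le> \<delta> / 2" using jL jpos by (simp add: field_simps)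
    ultimately show ?thesis by linarith
  qed
  have B: "real_of_int (-k + L) / L - (real_of_int L)^2 / j \<le> hh L j \<omega> (-k)" if "good \<omega>" for \<omega>
    using hh_bound[OF Lpos that _ _ jpos, of "-k"] Lpos L_def assms by simp
  have "\<forall>\<omega>. good \<omega> \<longrightarrow> 1 - \<delta> \<le> hh L j \<omega> (-k)"
    using A B by (meson order_trans)
  moreover have "k \<le> L" using L_def by simp
  ultimately show ?thesis using Lpos by blast
qed

lemma Ret:
  assumes "0 \<le> x" "0 < N" "0 < L" "0 \<le> c"
  shows "good \<omega> \<Longrightarrow> -L \<le> y \<Longrightarrow> y \<le> 0 \<Longrightarrow>
    (\<And>\<omega>''. good \<omega>'' \<Longrightarrow> (\<And>z. 0 \<le> z \<Longrightarrow> \<omega>'' z = \<omega> z) \<Longrightarrow> c \<le> S x N n \<omega>'' 0) \<Longrightarrow>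
    c * hh L j \<omega> y \<le> S x N (n + j) \<omega> y"
proof (induction j arbitrary: \<omega> y)
  case 0
  show ?case
  proof (cases "y = 0")
    case True
    then show ?thesis using 0(4)[OF 0(1)] by (simp add: hh_def stp_def)
  next
    case False
    then show ?thesis using S_nonneg[OF 0(1)] 0 by (simp add: hh_def stp_def)
  qed
next
  case (Suc j)
  show ?case
  proof (cases "stp L y")
    case True
    show ?thesis
    proof (cases "y = 0")
      case True
      have "c \<le> S x N n \<omega> 0" using Suc.prems(4)[OF Suc.prems(1)] by simp
      also have "\<dots> \<le> S x N (n + Suc j) \<omega> 0" using S_mono_time[OF Suc.prems(1)] by simp
      finally show ?thesis using True by (simp add: hh_def stp_def)
    next
      case False
      then have "hh L (Suc j) \<omega> y = 0" using True Suc.prems by (auto simp: hh_def Op_stop stp_def)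
      then show ?thesis using S_nonneg[OF Suc.prems(1)] by simp
    qed
  next
    case False
    note i = interior[OF False]
    have p: "0 \<le> \<omega> y 0" "\<omega> y 0 \<le> 1" using good_p[OF Suc.prems(1)] by auto
    have g: "good (eat y \<omega>)" using good_eat Suc.prems by simp
    have hyp: "c \<le> S x N n \<omega>'' 0" if "good \<omega>''" "\<And>z. 0 \<le> z \<Longrightarrow> \<omega>'' z = eat y \<omega> z" for \<omega>''
    proof -
      have "\<omega>'' z = \<omega> z" if "0 \<le> z" for z
      proof -
        have "z \<noteq> y" using that i by auto
        then show ?thesis using \<open>\<And>z. 0 \<le> z \<Longrightarrow> \<omega>'' z = eat y \<omega> z\<close>[OF that] by (simp add: eat_def)
      qed
      then show ?thesis using Suc.prems(4)[OF \<open>good \<omega>''\<close>] by blast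
    qed
    have a: "\<omega> y 0 * (c * hh L j (eat y \<omega>) (y + 1)) \<le> \<omega> y 0 * S x N (n + j) (eat y \<omega>) (y + 1)"
    proof -
      have "c * hh L j (eat y \<omega>) (y + 1) \<le> S x N (n + j) (eat y \<omega>) (y + 1)"
        using i by (intro Suc.IH[OF g _ _ hyp]) auto
      then show ?thesis using p by (intro mult_left_mono) auto
    qed
    have b: "(1 - \<omega> y 0) * (c * hh L j (eat y \<omega>) (y - 1)) \<le> (1 - \<omega> y 0) * S x N (n + j) (eat y \<omega>) (y - 1)"
    proof -
      have "c * hh L j (eat y \<omega>) (y - 1) \<le> S x N (n + j) (eat y \<omega>) (y - 1)"
        using i by (intro Suc.IH[OF g _ _ hyp]) auto
      then show ?thesis using p by (intro mult_left_mono) auto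
    qed
    have yN: "y \<noteq> N" "rw x \<omega> y = 0" using i assms by (auto simp: rw_def)
    have hh: "hh L (Suc j) \<omega> y = \<omega> y 0 * hh L j (eat y \<omega>) (y + 1) + (1 - \<omega> y 0) * hh L j (eat y \<omega>) (y - 1)"
      using False unfolding hh_def by simp
    have ss: "S x N (n + Suc j) \<omega> y = \<omega> y 0 * S x N (n + j) (eat y \<omega>) (y + 1) + (1 - \<omega> y 0) * S x N (n + j) (eat y \<omega>) (y - 1)"
      using yN by (simp add: S_Suc)
    show ?thesis unfolding hh ss using a b by (simp add: algebra_simps)
  qed
qed

lemma left_bound:
  assumes "0 \<le> x" "x < N" "0 < \<epsilon>" "0 \<le> k"
    and n1: "\<And>\<omega>. good \<omega> \<Longrightarrow> F x N m \<omega> 0 \<le> S x N n1 \<omega> 0 + \<epsilon> / 2"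
  shows "\<exists>j. \<forall>\<omega>. good \<omega> \<longrightarrow> F x N m \<omega> 0 \<le> S x N (n1 + j) \<omega> (-k) + \<epsilon>"
proof -
  define \<delta> where "\<delta> = \<epsilon> / (2 * (real m + 1))"
  have dpos: "0 < \<delta>" using assms by (simp add: \<delta>_def)
  have md: "real m * \<delta> \<le> \<epsilon> / 2"
    using assms unfolding \<delta>_def by (simp add: field_simps)
  obtain L j where L: "0 < L" "k \<le> L" and hj: "\<And>\<omega>. good \<omega> \<Longrightarrow> 1 - \<delta> \<le> hh L j \<omega> (-k)"
    using hh_close[OF dpos assms(4)] by blast
  have "F x N m \<omega> 0 \<le> S x N (n1 + j) \<omega> (-k) + \<epsilon>" if g: "good \<omega>" for \<omega>
  proof -
    define c where "c = max 0 (F x N m \<omega> 0 - \<epsilon> / 2)"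
    have c0: "0 \<le> c" by (simp add: c_def)
    have cm: "c \<le> real m" using F_le[OF g, of x N m 0] assms by (simp add: c_def)
    have hyp: "c \<le> S x N n1 \<omega>'' 0" if "good \<omega>''" "\<And>z. 0 \<le> z \<Longrightarrow> \<omega>'' z = \<omega> z" for \<omega>''
    proof -
      have "F x N m \<omega>'' 0 = F x N m \<omega> 0" using that(2) by (intro F_cong) auto
      then show ?thesis using n1[OF that(1)] S_nonneg[OF that(1), of x N n1 0] by (simp add: c_def)
    qed
    have "c * hh L j \<omega> (-k) \<le> S x N (n1 + j) \<omega> (-k)"
      using assms L by (intro Ret[OF _ _ _ c0 g _ _ hyp]) auto
    moreover have "c * (1 - \<delta>) \<le> c * hh L j \<omega> (-k)"
      using hj[OF g] c0 by (intro mult_left_mono) auto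
    moreover have "c * \<delta> \<le> real m * \<delta>" using cm dpos by (intro mult_right_mono) auto
    moreover have "F x N m \<omega> 0 - \<epsilon> / 2 \<le> c" by (simp add: c_def)
    ultimately show ?thesis using md by (simp add: algebra_simps)
  qed
  then show ?thesis by blast
qed

lemma Claim:
  assumes "0 \<le> x" "x < N"
  shows "0 < \<epsilon> \<Longrightarrow> \<exists>n. \<forall>\<omega>. good \<omega> \<longrightarrow> (\<forall>y. 0 \<le> y \<longrightarrow> y \<le> N \<longrightarrow> F x N m \<omega> y \<le> S x N n \<omega> y + \<epsilon>)"
proof (induction m arbitrary: \<epsilon>)
  case 0 then show ?case by (intro exI[of _ 0]) simp
next
  case (Suc m)
  have e2: "0 < \<epsilon> / 2" using Suc.prems by simp
  obtain n1 where n1: "\<And>\<omega> y. good \<omega> \<Longrightarrow> 0 \<le> y \<Longrightarrow> y \<le> N \<Longrightarrow> F x N m \<omega> y \<le> S x N n1 \<omega> y + \<epsilon> / 2"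
    using Suc.IH[OF e2] by blast
  obtain j where j: "\<And>\<omega>. good \<omega> \<Longrightarrow> F x N m \<omega> 0 \<le> S x N (n1 + j) \<omega> (-1) + \<epsilon>"
    using left_bound[OF assms Suc.prems, of 1 m n1] n1 assms by fastforce
  have "F x N (Suc m) \<omega> y \<le> S x N (Suc (n1 + j)) \<omega> y + \<epsilon>"
    if g: "good \<omega>" and y: "0 \<le> y" "y \<le> N" for \<omega> y
  proof (cases "y = N")
    case True
    then show ?thesis using S_nonneg[OF g, of x N "Suc (n1 + j)" y] Suc.prems by (simp add: F.simps(2))
  next
    case False
    have p: "0 \<le> \<omega> y 0" "\<omega> y 0 \<le> 1" using good_p[OF g] by auto
    have g': "good (eat y \<omega>)" using good_eat g by simp
    have A: "F x N m (eat y \<omega>) (y + 1) \<le> S x N (n1 + j) (eat y \<omega>) (y + 1) + \<epsilon>"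
    proof -
      have "F x N m (eat y \<omega>) (y + 1) \<le> S x N n1 (eat y \<omega>) (y + 1) + \<epsilon> / 2"
        using n1[OF g'] y False by simp
      moreover have "S x N n1 (eat y \<omega>) (y + 1) \<le> S x N (n1 + j) (eat y \<omega>) (y + 1)"
        using S_mono_time[OF g'] by simp
      ultimately show ?thesis using Suc.prems by simp
    qed
    have B: "F x N m (eat y \<omega>) (max 0 (y - 1)) \<le> S x N (n1 + j) (eat y \<omega>) (y - 1) + \<epsilon>"
    proof (cases "y = 0")
      case True
      then show ?thesis using j[OF g'] by simp
    next
      case False
      have "F x N m (eat y \<omega>) (y - 1) \<le> S x N n1 (eat y \<omega>) (y - 1) + \<epsilon> / 2"
        using n1[OF g'] y False by simp
      moreover have "S x N n1 (eat y \<omega>) (y - 1) \<le> S x N (n1 + j) (eat y \<omega>) (y - 1)"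
        using S_mono_time[OF g'] by simp
      moreover have "max 0 (y - 1) = y - 1" using y False by simp
      ultimately show ?thesis using Suc.prems by simp
    qed
    have a: "\<omega> y 0 * F x N m (eat y \<omega>) (y + 1) \<le> \<omega> y 0 * (S x N (n1 + j) (eat y \<omega>) (y + 1) + \<epsilon>)"
      using A p by (intro mult_left_mono) auto
    have b: "(1 - \<omega> y 0) * F x N m (eat y \<omega>) (max 0 (y - 1)) \<le> (1 - \<omega> y 0) * (S x N (n1 + j) (eat y \<omega>) (y - 1) + \<epsilon>)"
      using B p by (intro mult_left_mono) auto
    show ?thesis using a b False by (simp add: F.simps(2) S_Suc algebra_simps)
  qed
  then show ?case by blast
qed

lemma Cprime:
  assumes "0 \<le> x" "x < N" "good \<omega>" "0 \<le> k"
  shows "ennreal (F x N m \<omega> 0) \<le> (SUP n. ennreal (S x N n \<omega> (-k)))"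
proof (rule ennreal_le_epsilon)
  fix e :: real assume e: "0 < e"
  have e2: "0 < e / 2" using e by simp
  obtain n1 where n1: "\<And>\<omega> y. good \<omega> \<Longrightarrow> 0 \<le> y \<Longrightarrow> y \<le> N \<Longrightarrow> F x N m \<omega> y \<le> S x N n1 \<omega> y + e / 2"
    using Claim[OF assms(1,2) e2, of m] by blast
  obtain j where j: "\<And>\<omega>. good \<omega> \<Longrightarrow> F x N m \<omega> 0 \<le> S x N (n1 + j) \<omega> (-k) + e"
    using left_bound[OF assms(1,2) e assms(4), of m n1] n1 assms by fastforce
  have "ennreal (F x N m \<omega> 0) \<le> ennreal (S x N (n1 + j) \<omega> (-k) + e)"
    using j[OF assms(3)] by (rule ennreal_leI)
  also have "\<dots> = ennreal (S x N (n1 + j) \<omega> (-k)) + ennreal e"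
    using S_nonneg[OF assms(3)] e by (simp add: ennreal_plus)
  also have "\<dots> \<le> (SUP n. ennreal (S x N n \<omega> (-k))) + ennreal e"
    by (intro add_mono SUP_upper) auto
  finally show "ennreal (F x N m \<omega> 0) \<le> (SUP n. ennreal (S x N n \<omega> (-k))) + ennreal e" .
qed

lemma F_meas: "(\<lambda>\<omega>. F x N m \<omega> y) \<in> borel_measurable MF"
proof (induction m arbitrary: y)
  case 0 then show ?case by simp
next
  case (Suc m)
  have a: "(\<lambda>\<omega>. F x N m (eat y \<omega>) (y + 1)) \<in> borel_measurable MF"
    using measurable_compose[OF eat_meas Suc.IH] by simp
  have b: "(\<lambda>\<omega>. F x N m (eat y \<omega>) (max 0 (y - 1))) \<in> borel_measurable MF"
    using measurable_compose[OF eat_meas Suc.IH] by simp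
  show ?case
    using a b rw_meas[of x y] comp_meas[of y 0] by (simp add: F.simps(2))
qed

definition extn :: "(int \<Rightarrow> nat \<Rightarrow> real) \<Rightarrow> env" where
  "extn r = (\<lambda>z. if 0 \<le> z then r z else (\<lambda>_. 1))"

definition Phi :: "int \<Rightarrow> int \<Rightarrow> (int \<Rightarrow> nat \<Rightarrow> real) \<Rightarrow> ennreal" where
  "Phi x N r = (SUP m. ennreal (F x N m (extn r) 0))"

lemma ext_meas: "extn \<in> measurable Omega_plus_nonneg MF"
proof -
  have "(\<lambda>r z. extn r z) \<in> measurable Omega_plus_nonneg MF"
  proof (rule measurable_PiM_single')
    fix z :: int
    show "(\<lambda>r. extn r z) \<in> measurable Omega_plus_nonneg (PiM UNIV (\<lambda>_::nat. (borel :: real measure)))"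
    proof (cases "0 \<le> z")
      case True
      have "(\<lambda>r. r z) \<in> measurable Omega_plus_nonneg (PiM UNIV (\<lambda>_::nat. (borel :: real measure)))"
        unfolding Omega_plus_nonneg_def
      proof (rule measurable_PiM_single')
        fix i :: nat
        have c1: "(\<lambda>r. r z) \<in> measurable (PiM {0::int..} (\<lambda>_. PiM UNIV (\<lambda>_::nat. restrict_space borel {1/2..1::real}))) (PiM UNIV (\<lambda>_::nat. restrict_space borel {1/2..1::real}))"
          using True by (intro measurable_component_singleton) simp
        have c2: "(\<lambda>v. v i) \<in> measurable (PiM UNIV (\<lambda>_::nat. restrict_space borel {1/2..1::real})) (restrict_space borel {1/2..1::real})"
          by (intro measurable_component_singleton) simp
        have c3: "(\<lambda>t. t) \<in> measurable (restrict_space borel {1/2..1::real}) borel"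
          by (intro measurable_restrict_space1) simp
        show "(\<lambda>r. r z i) \<in> borel_measurable (PiM {0::int..} (\<lambda>_. PiM UNIV (\<lambda>_::nat. restrict_space borel {1/2..1::real})))"
          using measurable_compose[OF measurable_compose[OF c1 c2] c3] by simp
      qed (auto simp: space_PiM)
      then show ?thesis using True by (simp add: extn_def)
    next
      case False
      have "(\<lambda>r::int \<Rightarrow> nat \<Rightarrow> real. (\<lambda>_::nat. 1::real)) \<in> measurable Omega_plus_nonneg (PiM UNIV (\<lambda>_::nat. (borel :: real measure)))"
        by (intro measurable_const) (auto simp: space_PiM)
      then show ?thesis using False by (simp add: extn_def)
    qed
  qed (auto simp: space_PiM)
  then show ?thesis by simp
qed

lemma Phi_meas: "Phi x N \<in> borel_measurable Omega_plus_nonneg"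
proof -
  have "(\<lambda>r. ennreal (F x N m (extn r) 0)) \<in> borel_measurable Omega_plus_nonneg" for m
    using measurable_compose[OF ext_meas F_meas[of x N m 0]] by simp
  then show ?thesis unfolding Phi_def by measurable
qed

lemma restr_meas:
  assumes "sets M = sets Omega_plus"
  shows "env_shift_restr k \<in> measurable M Omega_plus_nonneg"
proof -
  have "(\<lambda>\<omega>. \<lambda>z\<in>{0::int..}. \<omega> (z + int k)) \<in> measurable Omega_plus Omega_plus_nonneg"
    unfolding Omega_plus_nonneg_def Omega_plus_def
    by (intro measurable_restrict measurable_component_singleton) simp
  then show ?thesis
    using measurable_cong_sets[OF assms refl, of Omega_plus_nonneg]
    by (simp add: env_shift_restr_def[abs_def])
qed

lemma Phi_restr: "Phi x N (env_shift_restr k \<omega>) = (SUP m. ennreal (F x N m (shift (int k) \<omega>) 0))"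
proof -
  have "F x N m (extn (env_shift_restr k \<omega>)) 0 = F x N m (shift (int k) \<omega>) 0" for m
    by (intro F_cong) (auto simp: extn_def env_shift_restr_def shift_def)
  then show ?thesis by (simp add: Phi_def)
qed

lemma Phi_bound:
  assumes "good \<omega>" "0 \<le> x" "x < N" "k < M"
  shows "Phi x N (env_shift_restr k \<omega>) \<le> (SUP n. ennreal (S (x + int k) (N + int M) n \<omega> 0))"
proof -
  have gs: "good (shift (int k) \<omega>)" using good_shift[OF assms(1)] .
  have "Phi x N (env_shift_restr k \<omega>) \<le> (SUP n. ennreal (S x N n (shift (int k) \<omega>) (- int k)))"
    unfolding Phi_restr using Cprime[OF assms(2,3) gs] by (intro SUP_least) auto
  also have "\<dots> = (SUP n. ennreal (S (x + int k) (N + int k) n \<omega> 0))"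
    using S_shift[of x "int k" N _ \<omega> 0] by simp
  also have "\<dots> \<le> (SUP n. ennreal (S (x + int k) (N + int M) n \<omega> 0))"
  proof (rule SUP_mono)
    fix n
    have "S (x + int k) (N + int k) n \<omega> 0 \<le> S (x + int k) (N + int M) n \<omega> 0"
      using assms by (intro S_mono_N) auto
    then show "\<exists>m\<in>UNIV. ennreal (S (x + int k) (N + int k) n \<omega> 0) \<le> ennreal (S (x + int k) (N + int M) m \<omega> 0)"
      by (intro bexI[of _ n] ennreal_leI) auto
  qed
  finally show ?thesis .
qed

lemma sum_bound:
  assumes "good \<omega>" "0 \<le> N"
  shows "(\<Sum>k<M. (SUP n. ennreal (S (x + int k) N n \<omega> 0))) \<le> ennreal (real_of_int N)"
proof -
  have "(\<Sum>k<M. (SUP n. ennreal (S (x + int k) N n \<omega> 0))) = (SUP n. \<Sum>k<M. ennreal (S (x + int k) N n \<omega> 0))"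
    by (rule ennreal_SUP_sum[symmetric]) (auto simp: incseq_def intro!: ennreal_leI S_mono_time[OF assms(1)])
  also have "\<dots> \<le> ennreal (real_of_int N)"
  proof (rule SUP_least)
    fix n
    have "(\<Sum>k<M. ennreal (S (x + int k) N n \<omega> 0)) = ennreal (\<Sum>k<M. S (x + int k) N n \<omega> 0)"
      using S_nonneg[OF assms(1)] by (simp add: sum_ennreal)
    also have "(\<Sum>k<M. S (x + int k) N n \<omega> 0) = (\<Sum>z\<in>(\<lambda>k. x + int k) ` {..<M}. S z N n \<omega> 0)"
      by (rule sum.reindex[symmetric, unfolded comp_def]) (auto simp: inj_on_def)
    also have "\<dots> \<le> T N n \<omega> 0" by (rule S_sum_T) (auto simp: assms)
    also have "\<dots> \<le> real_of_int N" using T_bound[OF assms(1)] assms by fastforce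
    finally show "(\<Sum>k<M. ennreal (S (x + int k) N n \<omega> 0)) \<le> ennreal (real_of_int N)"
      by (simp add: ennreal_leI)
  qed
  finally show ?thesis .
qed

lemma ennreal_avg_bound:
  assumes "\<And>M::nat. 0 < M \<Longrightarrow> of_nat M * I \<le> ennreal (real_of_int N + real M)" "0 \<le> N"
  shows "I \<le> (1::ennreal)"
proof -
  have "I \<le> ennreal (real_of_int N + 1)" using assms(1)[of 1] by simp
  then have It: "I < top" using order.strict_trans1 ennreal_less_top by blast
  obtain r where r: "I = ennreal r" "0 \<le> r"
    by (cases I rule: ennreal_cases) (use It in auto)
  have rM: "real M * r \<le> real_of_int N + real M" if "0 < M" for M :: nat
  proof -
    have "of_nat M * I = ennreal (real M * r)"
      using r by (simp add: ennreal_mult ennreal_of_nat_eq_real_of_nat)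
    then have "ennreal (real M * r) \<le> ennreal (real_of_int N + real M)"
      using assms(1)[OF that] by simp
    moreover have "0 \<le> real_of_int N + real M" using assms(2) by simp
    ultimately show ?thesis using ennreal_le_iff by blast
  qed
  show ?thesis
  proof (rule ccontr)
    assume a: "\<not> I \<le> 1"
    have r1: "1 < r"
    proof (rule ccontr)
      assume "\<not> 1 < r"
      then have "ennreal r \<le> ennreal 1" by (intro ennreal_leI) simp
      then show False using a r by simp
    qed
    obtain M :: nat where M: "real_of_int N / (r - 1) < M" using reals_Archimedean2 by blast
    have "0 \<le> real_of_int N / (r - 1)" using assms(2) r1 by simp
    then have M0: "0 < M" using M by linarith
    have "real_of_int N < real M * (r - 1)" using M r1 by (simp add: field_simps)
    then show False using rM[OF M0] by (simp add: algebra_simps)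
  qed
qed

lemma key_int:
  assumes P: "prob_space P" and sP: "sets P = sets Omega_plus" and st: "stationary_nonneg P"
    and x: "0 \<le> x" "x < N"
  shows "(\<integral>\<^sup>+\<omega>. Phi x N (env_shift_restr 0 \<omega>) \<partial>P) \<le> 1"
proof -
  interpret prob_space P by (rule P)
  define I where "I = (\<integral>\<^sup>+\<omega>. Phi x N (env_shift_restr 0 \<omega>) \<partial>P)"
  have pm: "(\<lambda>\<omega>. Phi x N (env_shift_restr k \<omega>)) \<in> borel_measurable P" for k
    using measurable_compose[OF restr_meas[OF sP] Phi_meas] by simp
  have stk: "(\<integral>\<^sup>+\<omega>. Phi x N (env_shift_restr k \<omega>) \<partial>P) = I" for k
  proof -
    have "(\<integral>\<^sup>+\<omega>. Phi x N (env_shift_restr k \<omega>) \<partial>P) = (\<integral>\<^sup>+r. Phi x N r \<partial>distr P Omega_plus_nonneg (env_shift_restr k))"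
      by (rule nn_integral_distr[symmetric]) (auto intro: restr_meas[OF sP] Phi_meas)
    also have "\<dots> = (\<integral>\<^sup>+r. Phi x N r \<partial>distr P Omega_plus_nonneg (env_shift_restr 0))"
      using st unfolding stationary_nonneg_def by metis
    also have "\<dots> = I"
      unfolding I_def by (rule nn_integral_distr) (auto intro: restr_meas[OF sP] Phi_meas)
    finally show ?thesis .
  qed
  have hM: "of_nat M * I \<le> ennreal (real_of_int N + real M)" if "0 < M" for M :: nat
  proof -
    have "of_nat M * I = (\<Sum>k<M. (\<integral>\<^sup>+\<omega>. Phi x N (env_shift_restr k \<omega>) \<partial>P))"
      using stk by simp
    also have "\<dots> = (\<integral>\<^sup>+\<omega>. (\<Sum>k<M. Phi x N (env_shift_restr k \<omega>)) \<partial>P)"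
      by (rule nn_integral_sum[symmetric]) (rule pm)
    also have "\<dots> \<le> (\<integral>\<^sup>+\<omega>. ennreal (real_of_int (N + int M)) \<partial>P)"
    proof (rule nn_integral_mono)
      fix \<omega> assume "\<omega> \<in> space P"
      then have g: "good \<omega>" using space_good[OF sP] by blast
      have "(\<Sum>k<M. Phi x N (env_shift_restr k \<omega>)) \<le> (\<Sum>k<M. (SUP n. ennreal (S (x + int k) (N + int M) n \<omega> 0)))"
        by (intro sum_mono Phi_bound[OF g x]) auto
      also have "\<dots> \<le> ennreal (real_of_int (N + int M))"
        using x by (intro sum_bound[OF g]) auto
      finally show "(\<Sum>k<M. Phi x N (env_shift_restr k \<omega>)) \<le> ennreal (real_of_int (N + int M))" .
    qed
    also have "\<dots> = ennreal (real_of_int N + real M)"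
      by (simp add: emeasure_space_1)
    finally show ?thesis .
  qed
  show ?thesis unfolding I_def[symmetric] by (rule ennreal_avg_bound[of I N, OF hM]) (use x in simp_all)
qed

theorem mainTheorem11:
  fixes P :: "env measure" and x :: int
  assumes "prob_space P"
    and "sets P = sets Omega_plus"
    and "stationary_nonneg P"
    and "x \<ge> 0"
  shows "annealed_E_drift P 0 x \<le> 1"
proof -
  note sP = assms(2)
  have Rm: "(\<lambda>\<omega>. ennreal (R x n \<omega> 0)) \<in> borel_measurable P" for n
  proof -
    have "(\<lambda>\<omega>. R x n \<omega> 0) \<in> borel_measurable MF"
      unfolding R_def by (rule Op_meas) (rule rw_meas)
    then have "(\<lambda>\<omega>. R x n \<omega> 0) \<in> borel_measurable P"
      using measurable_compose[OF to_MF[OF sP]] by blast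
    then show ?thesis by (rule measurable_compose[OF _ measurable_ennreal])
  qed
  have "annealed_E_drift P 0 x = (\<integral>\<^sup>+\<omega>. (SUP n. ennreal (R x n \<omega> 0)) \<partial>P)"
    unfolding annealed_E_drift_def
    by (rule nn_integral_cong) (simp add: quenched_eq space_good[OF sP])
  also have "\<dots> = (SUP n. (\<integral>\<^sup>+\<omega>. ennreal (R x n \<omega> 0) \<partial>P))"
  proof (rule nn_integral_monotone_convergence_SUP_AE)
    show "AE \<omega> in P. ennreal (R x n \<omega> 0) \<le> ennreal (R x (Suc n) \<omega> 0)" for n
      by (rule AE_I2) (auto intro!: ennreal_leI R_mono_Suc space_good[OF sP])
  qed (rule Rm)
  also have "\<dots> \<le> 1"
  proof (rule SUP_least)
    fix n
    define N where "N = x + int n + 1"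
    have "(\<integral>\<^sup>+\<omega>. ennreal (R x n \<omega> 0) \<partial>P) \<le> (\<integral>\<^sup>+\<omega>. Phi x N (env_shift_restr 0 \<omega>) \<partial>P)"
    proof (rule nn_integral_mono)
      fix \<omega> assume "\<omega> \<in> space P"
      then have g: "good \<omega>" using space_good[OF sP] by blast
      have "R x n \<omega> 0 = S x N n \<omega> 0" using assms(4) by (intro R_eq_S) (simp add: N_def)
      also have "\<dots> \<le> F x N n \<omega> (max 0 0)" using S_le_F[OF g assms(4), of N n 0] assms(4) by (simp add: N_def)
      also have "\<dots> = F x N n (extn (env_shift_restr 0 \<omega>)) 0"
        by (simp, intro F_cong) (auto simp: extn_def env_shift_restr_def)
      finally have "ennreal (R x n \<omega> 0) \<le> ennreal (F x N n (extn (env_shift_restr 0 \<omega>)) 0)"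
        by (rule ennreal_leI)
      also have "\<dots> \<le> Phi x N (env_shift_restr 0 \<omega>)"
        unfolding Phi_def by (rule SUP_upper) simp
      finally show "ennreal (R x n \<omega> 0) \<le> Phi x N (env_shift_restr 0 \<omega>)" .
    qed
    also have "\<dots> \<le> 1"
      using key_int[OF assms(1-3) assms(4)] by (simp add: N_def)
    finally show "(\<integral>\<^sup>+\<omega>. ennreal (R x n \<omega> 0) \<partial>P) \<le> 1" .
  qed
  finally show ?thesis .
qed

end
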